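(* Let $n\ge 2$, let $A\in\mathbb{R}^{n\times n}$ be symmetric with zero diagonal, let $\lambda>0$, and let $p_1,\dots,p_n\in[0,1)$ with $p_{\max}=\max_ip_i$. Then for every fixed $w\in\mathbb{R}^{2n-1}$, $$\mathbb{E}_{X\sim\mathcal{D}_{\mathsf{miss}}}[G_{\mathsf{miss}}(w;X)]=\nabla\widetilde S(w),$$ and for all $X\in\{-1,0,1\}^n$ and all $w\in\Delta(\lambda,2n-1)$, $$\|G_{\mathsf{miss}}(w;X)\|_\infty\le\frac{1}{(1-p_{\max})^2}\exp\left(\frac{\lambda}{1-p_{\max}}\right).$$
   Context: Ising model $\mathcal{D}=\mathcal{D}(A,0)$ on $\{-1,1\}^n$: $\Pr[Z=z]\propto\exp\big(\sum_{i<j}A_{ij}z_iz_j\big)$. Missing-data distribution $\mathcal{D}_{\mathsf{miss}}$: draw $Z\sim\mathcal{D}$ and independent $C_1,\dots,C_n$ with $C_i\in\{0,1\}$, $\Pr[C_i=1]=1-p_i$; output $X$ with $X_i=C_iZ_i$ (a missing entry is recorded as $0$). $\Delta(W,k)=\{x\in\mathbb{R}^k:x\ge0,\sum_ix_i=W\}$. Simplex ISO: $\widetilde S(w)=\mathbb{E}_{Z\sim\mathcal{D}}\big[\exp\big(-\sum_{j=1}^{n-1}(w_j-w_{n-1+j})Z_nZ_j\big)\big]$ for $w\in\mathbb{R}^{2n-1}$. Estimator: for $w\in\mathbb{R}^{2n-1}$, $X\in\{-1,0,1\}^n$, put $v_j=w_j-w_{n-1+j}$ and for $i\in[n-1]$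 $$g^i_{\mathsf{miss}}(w;X)=-\frac{X_n}{1-p_n}\cdot\frac{\exp(-v_iX_nX_i)X_i}{1-p_i}\cdot\prod_{j\in[n-1],\,j\ne i}\frac{\exp(-v_jX_nX_j)-p_j}{1-p_j},$$ and $G_{\mathsf{miss}}(w;X)=\sum_{i=1}^{n-1}g^i_{\mathsf{miss}}(w;X)(e^i-e^{n-1+i})\in\mathbb{R}^{2n-1}$, where $e^i$ is the $i$-th standard basis vector of $\mathbb{R}^{2n-1}$. *)

theory Defs
  imports Complex_Main "HOL-Library.FuncSet"
begin

text \<open>Nodes are indexed by 1..n; vectors w in R^(2n-1) are functions nat => real,
  only the entries 1..2n-1 matter.\<close>

definition spins :: "nat \<Rightarrow> (nat \<Rightarrow> real) set" where
  "spins n = PiE {1..n} (\<lambda>_. {-1, 1})"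

definition masks :: "nat \<Rightarrow> (nat \<Rightarrow> real) set" where
  "masks n = PiE {1..n} (\<lambda>_. {0, 1})"

definition obs_space :: "nat \<Rightarrow> (nat \<Rightarrow> real) set" where
  "obs_space n = PiE {1..n} (\<lambda>_. {-1, 0, 1})"

definition ising_weight :: "(nat \<Rightarrow> nat \<Rightarrow> real) \<Rightarrow> nat \<Rightarrow> (nat \<Rightarrow> real) \<Rightarrow> real" where
  "ising_weight A n z = exp (\<Sum>i\<in>{1..n}. \<Sum>j\<in>{i<..n}. A i j * z i * z j)"

definition ising_prob :: "(nat \<Rightarrow> nat \<Rightarrow> real) \<Rightarrow> nat \<Rightarrow> (nat \<Rightarrow> real) \<Rightarrow> real" where
  "ising_prob A n z = ising_weight A n z / (\<Sum>y\<in>spins n. ising_weight A n y)"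

definition ising_expect :: "(nat \<Rightarrow> nat \<Rightarrow> real) \<Rightarrow> nat \<Rightarrow> ((nat \<Rightarrow> real) \<Rightarrow> real) \<Rightarrow> real" where
  "ising_expect A n f = (\<Sum>z\<in>spins n. ising_prob A n z * f z)"

definition mask_prob :: "(nat \<Rightarrow> real) \<Rightarrow> nat \<Rightarrow> (nat \<Rightarrow> real) \<Rightarrow> real" where
  "mask_prob p n c = (\<Prod>i\<in>{1..n}. if c i = 1 then 1 - p i else p i)"

definition miss_expect :: "(nat \<Rightarrow> nat \<Rightarrow> real) \<Rightarrow> (nat \<Rightarrow> real) \<Rightarrow> nat \<Rightarrow> ((nat \<Rightarrow> real) \<Rightarrow> 'a::real_vector) \<Rightarrow> 'a" where
  "miss_expect A p n f = (\<Sum>z\<in>spins n. \<Sum>c\<in>masks n.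
      (ising_prob A n z * mask_prob p n c) *\<^sub>R f (\<lambda>i. c i * z i))"

definition simplex :: "real \<Rightarrow> nat \<Rightarrow> (nat \<Rightarrow> real) set" where
  "simplex W k = {x. (\<forall>i\<in>{1..k}. x i \<ge> 0) \<and> (\<Sum>i\<in>{1..k}. x i) = W}"

definition S_tilde :: "(nat \<Rightarrow> nat \<Rightarrow> real) \<Rightarrow> nat \<Rightarrow> (nat \<Rightarrow> real) \<Rightarrow> real" where
  "S_tilde A n w = ising_expect A n
     (\<lambda>z. exp (- (\<Sum>j\<in>{1..n-1}. (w j - w (n - 1 + j)) * z n * z j)))"

definition e_vec :: "nat \<Rightarrow> nat \<Rightarrow> real" where
  "e_vec i = (\<lambda>k. if k = i then 1 else 0)"

definition g_miss :: "(nat \<Rightarrow> real) \<Rightarrow> nat \<Rightarrow> nat \<Rightarrow> (nat \<Rightarrow> real) \<Rightarrow> (nat \<Rightarrow> real) \<Rightarrow> real" where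
  "g_miss p n i w X =
     (let v = (\<lambda>j. w j - w (n - 1 + j)) in
      - (X n / (1 - p n)) * (exp (- v i * X n * X i) * X i / (1 - p i))
        * (\<Prod>j\<in>{1..n-1} - {i}. (exp (- v j * X n * X j) - p j) / (1 - p j)))"

definition G_miss :: "(nat \<Rightarrow> real) \<Rightarrow> nat \<Rightarrow> (nat \<Rightarrow> real) \<Rightarrow> (nat \<Rightarrow> real) \<Rightarrow> (nat \<Rightarrow> real)" where
  "G_miss p n w X = (\<lambda>k. \<Sum>i\<in>{1..n-1}. g_miss p n i w X * (e_vec i k - e_vec (n - 1 + i) k))"

end

theory Submission imports Defs "HOL-Analysis.Convex" begin

lemma cvx: fixes a q :: real assumes "a \<ge> 0" "q \<ge> 1"
  shows "1 + q * (exp a - 1) \<le> exp (q * a)"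
proof -
  have "exp ((1 - 1/q) *\<^sub>R 0 + (1/q) *\<^sub>R (q*a)) \<le> (1 - 1/q) * exp 0 + (1/q) * exp (q*a)"
    using convex_onD[OF exp_convex, of "1/q" 0 "q*a"] assms by auto
  moreover have "(1 - 1/q) *\<^sub>R 0 + (1/q) *\<^sub>R (q*a) = a" using assms by simp
  ultimately have "exp a \<le> (1 - 1/q) + (1/q) * exp (q*a)" by simp
  hence "q * exp a \<le> q * ((1 - 1/q) + (1/q) * exp (q*a))" using assms by simp
  also have "\<dots> = q - 1 + exp (q*a)" using assms by (simp add: field_simps)
  finally show ?thesis by (simp add: algebra_simps)
qed

lemma factor_bound: fixes p t a Q :: real
  assumes p: "0 \<le> p" "p < 1" and ta: "\<bar>t\<bar> \<le> a" and Q: "1/(1-p) \<le> Q"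
  shows "\<bar>exp t - p\<bar> / (1 - p) \<le> exp (Q * a)"
proof -
  define q where "q = 1/(1-p)"
  have q1: "q \<ge> 1" using p by (simp add: q_def field_simps)
  have a0: "a \<ge> 0" using ta by linarith
  have "q*a \<le> Q*a" using mult_right_mono[OF Q a0] by (simp add: q_def)
  hence qa: "exp (q*a) \<le> exp (Q*a)" by simp
  have eq: "\<bar>exp t - p\<bar> / (1 - p) = q * \<bar>exp t - p\<bar>" by (simp add: q_def)
  show ?thesis
  proof (cases "exp t \<ge> p")
    case True
    have "exp t \<le> exp a" using ta by simp
    hence "q * \<bar>exp t - p\<bar> \<le> q * (exp a - p)" using True q1 by (simp add: mult_left_mono)
    also have "\<dots> = 1 + q * (exp a - 1)" using p by (simp add: q_def field_simps)
    also have "\<dots> \<le> exp (q*a)" by (rule cvx[OF a0 q1])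
    finally show ?thesis using eq qa by linarith
  next
    case False
    have "exp (-a) \<le> exp t" using ta by simp
    moreover have "1 + (-a) \<le> exp (-a)" by (rule exp_ge_add_one_self)
    ultimately have "\<bar>exp t - p\<bar> \<le> a" using False p by linarith
    hence "q * \<bar>exp t - p\<bar> \<le> q * a" using q1 by (simp add: mult_left_mono)
    also have "\<dots> \<le> exp (q*a)" using exp_ge_add_one_self[of "q*a"] by linarith
    finally show ?thesis using eq qa by linarith
  qed
qed

lemma sum_masks: fixes f :: "nat \<Rightarrow> real \<Rightarrow> real"
  shows "(\<Sum>c\<in>masks n. \<Prod>j\<in>{1..n}. f j (c j)) = (\<Prod>j\<in>{1..n}. f j 0 + f j 1)"
  unfolding masks_def by (subst prod_sum_PiE[symmetric]) auto

definition psi :: "(nat \<Rightarrow> real) \<Rightarrow> nat \<Rightarrow> nat \<Rightarrow> (nat \<Rightarrow> real) \<Rightarrow> (nat \<Rightarrow> real) \<Rightarrow> nat \<Rightarrow> real \<Rightarrow> real" where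
  "psi p n i w z j b = (let v = (\<lambda>j. w j - w (n - 1 + j)) in
     if j = n then - (b * z n) / (1 - p n)
     else if j = i then exp (- v i * z n * (b * z i)) * (b * z i) / (1 - p i)
     else (exp (- v j * z n * (b * z j)) - p j) / (1 - p j))"

lemma ivl_split: "(n::nat) \<ge> 2 \<Longrightarrow> {1..n} = insert n {1..n-1}" by auto

lemma g_prod:
  assumes n2: "n \<ge> 2" and i: "i \<in> {1..n-1}" and c: "c \<in> masks n"
  shows "g_miss p n i w (\<lambda>j. c j * z j) = (\<Prod>j\<in>{1..n}. psi p n i w z j (c j))"
proof -
  have cn: "c n = 0 \<or> c n = 1" using c n2 unfolding masks_def by (auto simp: PiE_iff)
  have nn: "n \<notin> {1..n-1}" using n2 by auto
  have iS: "{1..n-1} = insert i ({1..n-1} - {i})" using i by auto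
  have "(\<Prod>j\<in>{1..n}. psi p n i w z j (c j)) = psi p n i w z n (c n) * (\<Prod>j\<in>{1..n-1}. psi p n i w z j (c j))"
    using ivl_split[OF n2] nn by simp
  also have "(\<Prod>j\<in>{1..n-1}. psi p n i w z j (c j)) = psi p n i w z i (c i) * (\<Prod>j\<in>{1..n-1}-{i}. psi p n i w z j (c j))"
    by (rule prod.remove) (use i in auto)
  finally have R: "(\<Prod>j\<in>{1..n}. psi p n i w z j (c j)) = psi p n i w z n (c n) * (psi p n i w z i (c i) * (\<Prod>j\<in>{1..n-1}-{i}. psi p n i w z j (c j)))" .
  have ni: "i \<noteq> n" using i n2 by auto
  show ?thesis
  proof (cases "c n = 0")
    case True
    then show ?thesis unfolding R by (simp add: g_miss_def psi_def Let_def)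
  next
    case False
    hence c1: "c n = 1" using cn by simp
    have P: "(\<Prod>j\<in>{1..n-1}-{i}. psi p n i w z j (c j)) =
      (\<Prod>j\<in>{1..n-1}-{i}. (exp (- (w j - w (n - 1 + j)) * (c n * z n) * (c j * z j)) - p j) / (1 - p j))"
      by (rule prod.cong) (auto simp: psi_def Let_def c1)
    show ?thesis unfolding R P g_miss_def Let_def using ni c1 by (simp add: psi_def) (simp add: algebra_simps)
  qed
qed

lemma g_expect:
  assumes n2: "n \<ge> 2" and i: "i \<in> {1..n-1}" and pr: "\<forall>j\<in>{1..n}. 0 \<le> p j \<and> p j < 1"
  shows "(\<Sum>c\<in>masks n. mask_prob p n c * g_miss p n i w (\<lambda>j. c j * z j))
     = - z n * z i * exp (- (\<Sum>j\<in>{1..n-1}. (w j - w (n - 1 + j)) * z n * z j))"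
proof -
  define mu where "mu j b = (if b = 1 then 1 - p j else p j)" for j and b :: real
  have "(\<Sum>c\<in>masks n. mask_prob p n c * g_miss p n i w (\<lambda>j. c j * z j))
      = (\<Sum>c\<in>masks n. \<Prod>j\<in>{1..n}. mu j (c j) * psi p n i w z j (c j))"
    by (rule sum.cong) (auto simp: g_prod[OF n2 i] mask_prob_def mu_def prod.distrib)
  also have "\<dots> = (\<Prod>j\<in>{1..n}. mu j 0 * psi p n i w z j 0 + mu j 1 * psi p n i w z j 1)"
    by (rule sum_masks)
  also have "\<dots> = (\<Prod>j\<in>{1..n}. if j = n then - z n else if j = i then z i * exp (- (w i - w (n - 1 + i)) * z n * z i)
        else exp (- (w j - w (n - 1 + j)) * z n * z j))"
  proof (rule prod.cong)
    fix j assume j: "j \<in> {1..n}"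
    have "p j < 1" using pr j by blast
    hence "p j \<noteq> 1" by simp
    then show "mu j 0 * psi p n i w z j 0 + mu j 1 * psi p n i w z j 1 = (if j = n then - z n else if j = i then z i * exp (- (w i - w (n - 1 + i)) * z n * z i)
        else exp (- (w j - w (n - 1 + j)) * z n * z j))"
      by (auto simp: mu_def psi_def Let_def field_simps)
  qed simp
  also have "\<dots> = - z n * (z i * exp (- (w i - w (n - 1 + i)) * z n * z i) * (\<Prod>j\<in>{1..n-1}-{i}. exp (- (w j - w (n - 1 + j)) * z n * z j)))"
  proof -
    have nn: "n \<notin> {1..n-1}" using n2 by auto
    have iS: "{1..n-1} = insert i ({1..n-1} - {i})" using i by auto
    have ni: "i \<noteq> n" using i n2 by auto
    let ?f = "\<lambda>j. if j = n then - z n else if j = i then z i * exp (- (w i - w (n - 1 + i)) * z n * z i)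
        else exp (- (w j - w (n - 1 + j)) * z n * z j)"
    have "prod ?f {1..n} = ?f n * prod ?f {1..n-1}"
      by (subst ivl_split[OF n2], rule prod.insert) (use nn in auto)
    also have "prod ?f {1..n-1} = ?f i * prod ?f ({1..n-1} - {i})"
      by (rule prod.remove) (use i in auto)
    also have "prod ?f ({1..n-1} - {i}) = (\<Prod>j\<in>{1..n-1}-{i}. exp (- (w j - w (n - 1 + j)) * z n * z j))"
      by (rule prod.cong) (use n2 in auto)
    finally show ?thesis using ni by simp
  qed
  also have "\<dots> = - z n * z i * (\<Prod>j\<in>{1..n-1}. exp (- (w j - w (n - 1 + j)) * z n * z j))"
  proof -
    have iS: "{1..n-1} = insert i ({1..n-1} - {i})" using i by auto
    show ?thesis by (subst prod.remove[of "{1..n-1}" i]) (use i in \<open>auto simp: algebra_simps\<close>)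
  qed
  also have "(\<Prod>j\<in>{1..n-1}. exp (- (w j - w (n - 1 + j)) * z n * z j)) = exp (- (\<Sum>j\<in>{1..n-1}. (w j - w (n - 1 + j)) * z n * z j))"
    unfolding sum_negf[symmetric] by (subst exp_sum) (auto intro!: prod.cong simp: algebra_simps)
  finally show ?thesis .
qed

lemma upd_deriv: "((\<lambda>t. (w(k:=t)) j) has_real_derivative e_vec j k) (at x)"
proof (cases "j = k")
  case True then show ?thesis by (simp add: e_vec_def)
next
  case False then show ?thesis by (simp add: e_vec_def)
qed

lemma deriv_part:
  assumes n2: "n \<ge> 2" and pr: "\<forall>j\<in>{1..n}. 0 \<le> p j \<and> p j < 1"
  shows "((\<lambda>t. S_tilde A n (w(k := t))) has_real_derivative
               miss_expect A p n (\<lambda>X. G_miss p n w X k)) (at (w k))"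
proof -
  define E where "E z = exp (- (\<Sum>j\<in>{1..n-1}. (w j - w (n - 1 + j)) * z n * z j))" for z :: "nat \<Rightarrow> real"
  define s where "s z = (\<Sum>j\<in>{1..n-1}. (e_vec j k - e_vec (n - 1 + j) k) * z n * z j)" for z :: "nat \<Rightarrow> real"
  define d where "d i = e_vec i k - e_vec (n - 1 + i) k" for i
  have inner: "((\<lambda>t. \<Sum>j\<in>{1..n-1}. ((w(k:=t)) j - (w(k:=t)) (n - 1 + j)) * z n * z j) has_real_derivative s z) (at x)" for z x
    unfolding s_def by (intro DERIV_sum DERIV_cmult_right DERIV_diff upd_deriv)
  have D0: "((\<lambda>t. S_tilde A n (w(k := t))) has_real_derivative
     (\<Sum>z\<in>spins n. ising_prob A n z * (exp (- (\<Sum>j\<in>{1..n-1}. ((w(k:=w k)) j - (w(k:=w k)) (n - 1 + j)) * z n * z j)) * - s z))) (at (w k))"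
    unfolding S_tilde_def ising_expect_def by (intro DERIV_sum DERIV_cmult DERIV_fun_exp DERIV_minus inner)
  hence D: "((\<lambda>t. S_tilde A n (w(k := t))) has_real_derivative
     (\<Sum>z\<in>spins n. ising_prob A n z * (E z * - s z))) (at (w k))"
    by (simp add: E_def)
  have "miss_expect A p n (\<lambda>X. G_miss p n w X k) = (\<Sum>z\<in>spins n. ising_prob A n z * (E z * - s z))"
    unfolding miss_expect_def
  proof (rule sum.cong)
    fix z assume z: "z \<in> spins n"
    let ?P = "ising_prob A n z"
    let ?g = "\<lambda>i c. g_miss p n i w (\<lambda>j. c j * z j)"
    let ?mp = "mask_prob p n"
    have "(\<Sum>c\<in>masks n. (?P * ?mp c) *\<^sub>R G_miss p n w (\<lambda>i. c i * z i) k)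
       = (\<Sum>c\<in>masks n. \<Sum>i\<in>{1..n-1}. ?P * d i * (?mp c * ?g i c))"
      by (simp add: G_miss_def d_def sum_distrib_left mult_ac)
    also have "\<dots> = (\<Sum>i\<in>{1..n-1}. \<Sum>c\<in>masks n. ?P * d i * (?mp c * ?g i c))"
      by (rule sum.swap)
    also have "\<dots> = (\<Sum>i\<in>{1..n-1}. ?P * d i * (\<Sum>c\<in>masks n. ?mp c * ?g i c))"
      by (simp add: sum_distrib_left)
    also have "\<dots> = (\<Sum>i\<in>{1..n-1}. ?P * d i * (- z n * z i * E z))"
      by (rule sum.cong) (simp_all add: g_expect[OF n2 _ pr] E_def)
    also have "\<dots> = ?P * (E z * - s z)"
      by (simp add: s_def d_def sum_distrib_left sum_negf[symmetric] mult_ac)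
    finally show "(\<Sum>c\<in>masks n. (?P * ?mp c) *\<^sub>R G_miss p n w (\<lambda>i. c i * z i) k) = ?P * (E z * - s z)" .
  qed simp
  with D show ?thesis by simp
qed

lemma G_bound:
  assumes n2: "n \<ge> 2" and gb: "\<forall>i\<in>{1..n-1}. \<bar>g_miss p n i w X\<bar> \<le> B" and B: "B \<ge> 0"
  shows "\<bar>G_miss p n w X k\<bar> \<le> B"
proof (cases "k \<le> n - 1")
  case True
  have "G_miss p n w X k = (\<Sum>i\<in>{1..n-1}. if i = k then g_miss p n i w X else 0)"
    unfolding G_miss_def e_vec_def by (rule sum.cong) (use True in auto)
  also have "\<dots> = (if k \<in> {1..n-1} then g_miss p n k w X else 0)"
    by (simp add: sum.delta)
  finally show ?thesis using gb B by auto
next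
  case False
  have "G_miss p n w X k = - (\<Sum>i\<in>{1..n-1}. if i = k - (n - 1) then g_miss p n i w X else 0)"
    unfolding G_miss_def e_vec_def sum_negf[symmetric] by (rule sum.cong) (use False in auto)
  also have "\<dots> = - (if k - (n - 1) \<in> {1..n-1} then g_miss p n (k - (n - 1)) w X else 0)"
    by (simp add: sum.delta)
  finally show ?thesis using gb B by auto
qed

lemma w_sum_bound:
  assumes n2: "n \<ge> 2" and w: "w \<in> simplex lam (2*n-1)"
  shows "(\<Sum>j\<in>{1..n-1}. \<bar>w j - w (n - 1 + j)\<bar>) \<le> lam"
proof -
  have w0: "\<forall>i\<in>{1..2*n-1}. w i \<ge> 0" and ws: "(\<Sum>i\<in>{1..2*n-1}. w i) = lam"
    using w unfolding simplex_def by auto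
  let ?S = "{1..n-1::nat}"
  let ?T = "(\<lambda>j. n - 1 + j) ` ?S"
  have inj: "inj_on (\<lambda>j. n - 1 + j) ?S" by (auto simp: inj_on_def)
  have RI: "sum (w \<circ> (\<lambda>j. n - 1 + j)) ?S = sum w ?T" by (simp only: sum.reindex[OF inj])
  have "(\<Sum>j\<in>?S. \<bar>w j - w (n - 1 + j)\<bar>) \<le> (\<Sum>j\<in>?S. w j + w (n - 1 + j))"
  proof (rule sum_mono)
    fix j assume "j \<in> ?S"
    hence "j \<in> {1..2*n-1}" "n - 1 + j \<in> {1..2*n-1}" using n2 by auto
    hence m: "j \<in> {1..2*n-1}" "n - 1 + j \<in> {1..2*n-1}" .
    have "w j \<ge> 0" using bspec[OF w0 m(1)] .
    moreover have "w (n - 1 + j) \<ge> 0" using bspec[OF w0 m(2)] .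
    ultimately
    show "\<bar>w j - w (n - 1 + j)\<bar> \<le> w j + w (n - 1 + j)" by linarith
  qed
  also have "\<dots> = sum w ?S + sum (w \<circ> (\<lambda>j. n - 1 + j)) ?S"
    by (simp add: sum.distrib comp_def)
  also have "\<dots> = sum w ?S + sum w ?T" using RI by simp
  also have "\<dots> = sum w (?S \<union> ?T)"
    by (rule sum.union_disjoint[symmetric]) auto
  also have "\<dots> \<le> sum w {1..2*n-1}"
    by (rule sum_mono2) (use w0 n2 in auto)
  finally show ?thesis using ws by simp
qed

lemma g_bound:
  assumes n2: "n \<ge> 2" and i: "i \<in> {1..n-1}" and X: "X \<in> obs_space n"
    and w: "w \<in> simplex lam (2*n-1)"
    and pr: "\<forall>j\<in>{1..n}. 0 \<le> p j \<and> p j < 1"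
    and pm: "\<forall>j\<in>{1..n}. p j \<le> pm" "pm < 1"
  shows "\<bar>g_miss p n i w X\<bar> \<le> (1/(1-pm))^2 * exp ((1/(1-pm)) * lam)"
proof -
  define Q where "Q = 1/(1-pm)"
  define v where "v j = w j - w (n - 1 + j)" for j
  define a where "a j = \<bar>v j\<bar>" for j
  have "0 \<le> p n" "p n \<le> pm" using pr pm n2 by auto
  hence "0 \<le> pm" by linarith
  have Q1: "Q \<ge> 1" using pm \<open>0 \<le> pm\<close> by (simp add: Q_def field_simps)
  have qQ: "1/(1 - p j) \<le> Q" if "j \<in> {1..n}" for j
    unfolding Q_def using pm pr that by (intro frac_le) auto
  have hX: "\<bar>X j\<bar> \<le> 1" if "j \<in> {1..n}" for j
  proof -
    have "X j \<in> {-1,0,1}" using X that unfolding obs_space_def by (rule PiE_mem)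
    thus ?thesis by auto
  qed
  have nin: "n \<in> {1..n}" "i \<in> {1..n}" using n2 i by auto
  have F1: "\<bar>- (X n / (1 - p n))\<bar> \<le> Q"
  proof -
    have "p n < 1" using pr nin by blast
    hence "\<bar>- (X n / (1 - p n))\<bar> = \<bar>X n\<bar> * (1/(1 - p n))" by (simp add: abs_divide)
    also have "\<dots> \<le> 1 * Q" using hX[OF nin(1)] qQ[OF nin(1)] \<open>p n < 1\<close>
      by (intro mult_mono) auto
    finally show ?thesis by simp
  qed
  have tb: "\<bar>- v j * X n * X j\<bar> \<le> a j" if "j \<in> {1..n-1}" for j
  proof -
    have "j \<in> {1..n}" using that by auto
    hence "\<bar>X n * X j\<bar> \<le> 1" using hX nin by (simp add: abs_mult mult_le_one)
    hence "\<bar>v j\<bar> * \<bar>X n * X j\<bar> \<le> \<bar>v j\<bar> * 1" by (intro mult_left_mono) auto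
    thus ?thesis by (simp add: a_def abs_mult mult.assoc)
  qed
  have F2: "\<bar>exp (- v i * X n * X i) * X i / (1 - p i)\<bar> \<le> exp (Q * a i) * Q"
  proof -
    have "exp (- v i * X n * X i) \<le> exp (a i)" using tb[OF i] by simp
    also have "\<dots> \<le> exp (Q * a i)" using Q1 mult_right_mono[OF Q1, of "a i"] by (simp add: a_def)
    finally have e: "exp (- v i * X n * X i) \<le> exp (Q * a i)" .
    have "p i < 1" using pr nin(2) by blast
    have "\<bar>exp (- v i * X n * X i) * X i / (1 - p i)\<bar> = exp (- v i * X n * X i) * (\<bar>X i\<bar> * (1/(1 - p i)))"
      using \<open>p i < 1\<close> by (simp add: abs_divide abs_mult)
    also have "\<dots> \<le> exp (Q * a i) * (1 * Q)"
      using e hX[OF nin(2)] qQ[OF nin(2)] \<open>p i < 1\<close> by (intro mult_mono) auto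
    finally show ?thesis by simp
  qed
  have F3: "\<bar>\<Prod>j\<in>{1..n-1}-{i}. (exp (- v j * X n * X j) - p j) / (1 - p j)\<bar> \<le> (\<Prod>j\<in>{1..n-1}-{i}. exp (Q * a j))"
    unfolding abs_prod
  proof (rule prod_mono)
    fix j assume j: "j \<in> {1..n-1}-{i}"
    hence j': "j \<in> {1..n}" by auto
    have pj: "p j < 1" "0 \<le> p j" using pr j' by auto
    have "\<bar>(exp (- v j * X n * X j) - p j) / (1 - p j)\<bar> = \<bar>exp (- v j * X n * X j) - p j\<bar> / (1 - p j)"
      using pj by (simp add: abs_divide)
    also have "\<dots> \<le> exp (Q * a j)"
      using factor_bound[of "p j" "- v j * X n * X j" "a j" Q] pj tb j qQ[OF j'] by auto
    finally show "0 \<le> \<bar>(exp (- v j * X n * X j) - p j) / (1 - p j)\<bar> \<and> \<bar>(exp (- v j * X n * X j) - p j) / (1 - p j)\<bar> \<le> exp (Q * a j)"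
      by simp
  qed
  have "\<bar>g_miss p n i w X\<bar> = \<bar>- (X n / (1 - p n))\<bar> * \<bar>exp (- v i * X n * X i) * X i / (1 - p i)\<bar>
      * \<bar>\<Prod>j\<in>{1..n-1}-{i}. (exp (- v j * X n * X j) - p j) / (1 - p j)\<bar>"
    unfolding g_miss_def v_def Let_def by (simp add: abs_mult)
  also have "\<dots> \<le> Q * (exp (Q * a i) * Q) * (\<Prod>j\<in>{1..n-1}-{i}. exp (Q * a j))"
    using F1 F2 F3 Q1 by (intro mult_mono) auto
  also have "(\<Prod>j\<in>{1..n-1}-{i}. exp (Q * a j)) = exp (\<Sum>j\<in>{1..n-1}-{i}. Q * a j)"
    by (simp add: exp_sum)
  also have "Q * (exp (Q * a i) * Q) * exp (\<Sum>j\<in>{1..n-1}-{i}. Q * a j) = Q^2 * exp (Q * a i + (\<Sum>j\<in>{1..n-1}-{i}. Q * a j))"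
    by (simp add: exp_add power2_eq_square mult_ac)
  also have "Q * a i + (\<Sum>j\<in>{1..n-1}-{i}. Q * a j) = Q * (\<Sum>j\<in>{1..n-1}. a j)"
    using i by (simp add: sum.remove sum_distrib_left[symmetric] distrib_left)
  also have "Q^2 * exp (Q * (\<Sum>j\<in>{1..n-1}. a j)) \<le> Q^2 * exp (Q * lam)"
  proof -
    have "(\<Sum>j\<in>{1..n-1}. a j) \<le> lam" using w_sum_bound[OF n2 w] by (simp add: a_def v_def)
    hence "Q * (\<Sum>j\<in>{1..n-1}. a j) \<le> Q * lam" using Q1 by (intro mult_left_mono) auto
    hence "exp (Q * (\<Sum>j\<in>{1..n-1}. a j)) \<le> exp (Q * lam)" by simp
    thus ?thesis by (intro mult_left_mono) auto
  qed
  finally show ?thesis by (simp add: Q_def)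
qed

theorem mainTheorem5:
  fixes A :: "nat \<Rightarrow> nat \<Rightarrow> real" and p :: "nat \<Rightarrow> real"
    and n :: nat and lam :: real
  assumes n2: "n \<ge> 2"
    and symm: "\<forall>i\<in>{1..n}. \<forall>j\<in>{1..n}. A i j = A j i"
    and diag: "\<forall>i\<in>{1..n}. A i i = 0"
    and lam_pos: "lam > 0"
    and p_range: "\<forall>i\<in>{1..n}. 0 \<le> p i \<and> p i < 1"
  shows "(\<forall>w :: nat \<Rightarrow> real. \<forall>k\<in>{1..2*n-1}.
            ((\<lambda>t. S_tilde A n (w(k := t))) has_real_derivative
               miss_expect A p n (\<lambda>X. G_miss p n w X k)) (at (w k)))
       \<and> (\<forall>X\<in>obs_space n. \<forall>w\<in>simplex lam (2*n-1). \<forall>k\<in>{1..2*n-1}.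
            \<bar>G_miss p n w X k\<bar> \<le>
              1 / (1 - Max (p ` {1..n}))^2 * exp (lam / (1 - Max (p ` {1..n}))))"
proof -
  have pr: "\<forall>j\<in>{1..n}. 0 \<le> p j \<and> p j < 1" using p_range .
  define pm where "pm = Max (p ` {1..n})"
  have fin: "finite (p ` {1..n})" and ne: "p ` {1..n} \<noteq> {}" using n2 by auto
  have pmge: "\<forall>j\<in>{1..n}. p j \<le> pm" unfolding pm_def using fin by auto
  have "pm \<in> p ` {1..n}" unfolding pm_def using Max_in[OF fin ne] .
  hence pm1: "pm < 1" using pr by auto
  have B: "(1/(1-pm))^2 * exp ((1/(1-pm)) * lam) = 1 / (1 - Max (p ` {1..n}))^2 * exp (lam / (1 - Max (p ` {1..n})))"
    unfolding pm_def[symmetric] by (simp add: power_one_over)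
  show ?thesis
  proof (intro conjI ballI allI)
    fix w :: "nat \<Rightarrow> real" and k assume "k \<in> {1..2*n-1}"
    show "((\<lambda>t. S_tilde A n (w(k := t))) has_real_derivative
               miss_expect A p n (\<lambda>X. G_miss p n w X k)) (at (w k))"
      by (rule deriv_part[OF n2 pr])
  next
    fix X w k assume X: "X \<in> obs_space n" and w: "w \<in> simplex lam (2*n-1)" and k: "k \<in> {1..2*n-1}"
    have gb: "\<forall>i\<in>{1..n-1}. \<bar>g_miss p n i w X\<bar> \<le> (1/(1-pm))^2 * exp ((1/(1-pm)) * lam)"
      using g_bound[OF n2 _ X w pr pmge pm1] by blast
    have B0: "0 \<le> (1/(1-pm))^2 * exp ((1/(1-pm)) * lam)"
      by (intro mult_nonneg_nonneg) auto
    have "\<bar>G_miss p n w X k\<bar> \<le> (1/(1-pm))^2 * exp ((1/(1-pm)) * lam)"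
      by (rule G_bound[OF n2 gb B0])
    thus "\<bar>G_miss p n w X k\<bar> \<le> 1 / (1 - Max (p ` {1..n}))^2 * exp (lam / (1 - Max (p ` {1..n})))"
      by (simp only: B)
  qed
qed

end
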